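(* Let $k\ge 3$ and let $\mathbf a=(a_1,\dots,a_k)$ be positive integers with $\gcd(a_1,\dots,a_k)=1$. Then $\mathcal T(\mathbf a)$ is old regular if and only if there is an index $i\in\{1,\dots,k\}$ such that $\mathcal T(\mathbf a[i])$ is primitive and regular and $a_i\mathbb Z_p\subseteq\overline{DQ_p(\mathbf a[i])}$ for all odd primes $p$.
   Context: For positive integers $a_1,\dots,a_k$, the triangular form $\mathcal T(a_1,\dots,a_k)$ is the polynomial $\sum_{i=1}^k a_i\,\frac{x_i(x_i+1)}{2}$. A nonnegative integer $n$ is represented by it if $\sum a_i x_i(x_i+1)/2=n$ has a solution $x\in\mathbb Z^k$, and locally represented if this equation has a solution in $\mathbb Z_p^k$ for every prime $p$. The form is primitive if the gcd of its coefficients is 1, and regular if it represents every positive integer that it locally represents. For $\mathbf a=(a_1,\dots,a_k)$ and $1\le i\le k$, $\mathbf a[i]$ denotes the vector obtained by deleting $a_i$. A regular form $\mathcal T(\mathbf a)$ is old if there is an index $i$ such that $\mathcal T(\mathbf a[i])$ represents exactly the same set of positive integers as $\mathcal T(\mathbf a)$; it is new if it is regular and not old. For a vector $\mathbf b=(b_1,\dots,b_r)$ of positive integers and an odd prime $p$, $\overline{DQ_p(\mathbf b)}=\{\gamma\in\mathbb Z_p:\gamma=\sum_i b_iy_i^2\text{ for some }y_i\in\mathbb Z_p\}$. *)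

theory Defs
  imports "HOL-Number_Theory.Number_Theory"
begin

definition del_nth :: "'a list \<Rightarrow> nat \<Rightarrow> 'a list" where
  "del_nth a i = take i a @ drop (Suc i) a"

definition tri_rep :: "nat list \<Rightarrow> nat \<Rightarrow> bool" where
  "tri_rep a n \<longleftrightarrow> (\<exists>x::nat \<Rightarrow> int.
     (\<Sum>i<length a. int (a ! i) * (x i * (x i + 1) div 2)) = int n)"

text \<open>A p-adic integer, as an element of the inverse limit of Z/p^m Z:
  a sequence of integers x m (representing a residue mod p^m) compatible under reduction.\<close>
definition padic_int :: "nat \<Rightarrow> (nat \<Rightarrow> int) \<Rightarrow> bool" where
  "padic_int p x \<longleftrightarrow> (\<forall>m. [x (Suc m) = x m] (mod (int p ^ m)))"

text \<open>Local representation at p: a solution in Z_p^k of sum a_i x_i(x_i+1) = 2n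
  (equivalent in the domain Z_p to sum a_i x_i(x_i+1)/2 = n), checked in every Z/p^m.\<close>
definition loc_rep_at :: "nat list \<Rightarrow> nat \<Rightarrow> nat \<Rightarrow> bool" where
  "loc_rep_at a p n \<longleftrightarrow> (\<exists>x::nat \<Rightarrow> nat \<Rightarrow> int.
     (\<forall>i<length a. padic_int p (x i)) \<and>
     (\<forall>m. [(\<Sum>i<length a. int (a ! i) * (x i m * (x i m + 1))) = 2 * int n] (mod (int p ^ m))))"

definition loc_rep :: "nat list \<Rightarrow> nat \<Rightarrow> bool" where
  "loc_rep a n \<longleftrightarrow> (\<forall>p. prime p \<longrightarrow> loc_rep_at a p n)"

definition primitive :: "nat list \<Rightarrow> bool" where
  "primitive a \<longleftrightarrow> Gcd (set a) = 1"

definition regular :: "nat list \<Rightarrow> bool" where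
  "regular a \<longleftrightarrow> (\<forall>n>0. loc_rep a n \<longrightarrow> tri_rep a n)"

definition old_regular :: "nat list \<Rightarrow> bool" where
  "old_regular a \<longleftrightarrow> regular a \<and>
     (\<exists>i<length a. \<forall>n>0. tri_rep (del_nth a i) n \<longleftrightarrow> tri_rep a n)"

definition new_regular :: "nat list \<Rightarrow> bool" where
  "new_regular a \<longleftrightarrow> regular a \<and> \<not> old_regular a"

text \<open>gamma (a p-adic integer) lies in the closure of DQ_p(b): gamma = sum b_j y_j^2, y_j in Z_p.\<close>
definition in_DQ_closure :: "nat \<Rightarrow> nat list \<Rightarrow> (nat \<Rightarrow> int) \<Rightarrow> bool" where
  "in_DQ_closure p b \<gamma> \<longleftrightarrow> (\<exists>y::nat \<Rightarrow> nat \<Rightarrow> int.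
     (\<forall>j<length b. padic_int p (y j)) \<and>
     (\<forall>m. [\<gamma> m = (\<Sum>j<length b. int (b ! j) * (y j m)^2)] (mod (int p ^ m))))"

definition mult_Zp_sub_DQ :: "nat \<Rightarrow> nat \<Rightarrow> nat list \<Rightarrow> bool" where
  "mult_Zp_sub_DQ p c b \<longleftrightarrow>
     (\<forall>\<gamma>. padic_int p \<gamma> \<longrightarrow> in_DQ_closure p b (\<lambda>m. int c * \<gamma> m))"

end

theory Submission
  imports Defs
begin


definition sk :: "nat \<Rightarrow> nat \<Rightarrow> nat" where
  "sk i j = (if j < i then j else Suc j)"

lemma length_del_nth: "i < length a \<Longrightarrow> length (del_nth a i) = length a - 1"
  by (simp add: del_nth_def)

lemma del_nth_nth: "i < length a \<Longrightarrow> j < length a - 1 \<Longrightarrow> del_nth a i ! j = a ! sk i j"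
  by (auto simp add: del_nth_def sk_def nth_append min_def)

lemma sum_split:
  fixes g :: "nat \<Rightarrow> 'b::comm_monoid_add"
  assumes "i < L"
  shows "(\<Sum>j<L. g j) = g i + (\<Sum>j<L-1. g (sk i j))"
proof -
  have inj: "inj_on (sk i) {..<L-1}" by (auto simp: inj_on_def sk_def split: if_splits)
  have im: "sk i ` {..<L-1} = {..<L} - {i}"
  proof
    show "sk i ` {..<L-1} \<subseteq> {..<L} - {i}" using assms by (auto simp: sk_def)
    show "{..<L} - {i} \<subseteq> sk i ` {..<L-1}"
    proof
      fix k assume k: "k \<in> {..<L} - {i}"
      show "k \<in> sk i ` {..<L-1}"
      proof (cases "k < i")
        case True then show ?thesis using k assms by (auto simp: sk_def image_iff intro!: bexI[of _ k])
      next
        case False then have "k = sk i (k - 1)" "k - 1 < L - 1" using k by (auto simp: sk_def)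
        then show ?thesis by blast
      qed
    qed
  qed
  have "(\<Sum>j<L. g j) = g i + sum g ({..<L} - {i})"
    using assms by (simp add: sum.remove)
  also have "sum g ({..<L} - {i}) = (\<Sum>j<L-1. g (sk i j))"
    using sum.reindex[OF inj, of g] im by simp
  finally show ?thesis .
qed

definition ext :: "nat \<Rightarrow> 'a \<Rightarrow> (nat \<Rightarrow> 'a) \<Rightarrow> nat \<Rightarrow> 'a" where
  "ext i c w k = (if k < i then w k else if k = i then c else w (k - 1))"

lemma ext_sk[simp]: "ext i c w (sk i j) = w j"
  by (simp add: ext_def sk_def)
lemma ext_i[simp]: "ext i c w i = c"
  by (simp add: ext_def)

lemma sum_del:
  fixes h :: "nat \<Rightarrow> nat \<Rightarrow> 'b::comm_monoid_add"
  assumes "i < length a"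
  shows "(\<Sum>j<length a. h (a ! j) j) = h (a ! i) i + (\<Sum>j<length (del_nth a i). h (del_nth a i ! j) (sk i j))"
  using sum_split[OF assms, of "\<lambda>j. h (a ! j) j"] assms
  by (simp add: length_del_nth del_nth_nth)



lemma compactness:
  fixes p :: nat and L :: nat and P :: "nat \<Rightarrow> (nat \<Rightarrow> int) \<Rightarrow> bool"
  assumes p: "p > 1"
  and down: "\<And>m z. P (Suc m) z \<Longrightarrow> P m z"
  and inv: "\<And>m z z'. (\<And>j. j < L \<Longrightarrow> [z j = z' j] (mod int p ^ m)) \<Longrightarrow> P m z \<Longrightarrow> P m z'"
  and ex: "\<And>m. \<exists>z. P m z"
  shows "\<exists>x. (\<forall>j<L. padic_int p (x j)) \<and> (\<forall>m. P m (\<lambda>j. x j m))"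
proof -
  have downs: "P m z" if "P M z" "m \<le> M" for m M z
    using that(2,1) by (induction rule: dec_induct) (auto intro: down)
  define good where "good m z \<longleftrightarrow> (\<forall>M\<ge>m. \<exists>z'. P M z' \<and> (\<forall>j<L. [z' j = z j] (mod int p ^ m)))" for m z
  have good0: "good 0 z" for z
    unfolding good_def using ex by simp
  have goodP: "P m z" if "good m z" for m z
  proof -
    from that obtain z' where "P m z'" "\<forall>j<L. [z' j = z j] (mod int p ^ m)"
      unfolding good_def by blast
    then show ?thesis using inv[where z=z' and z'=z and m=m] by blast
  qed
  have step: "\<exists>z'. good (Suc m) z' \<and> (\<forall>j<L. [z' j = z j] (mod int p ^ m))" if g: "good m z" for m z
  proof -
    have "\<forall>M. \<exists>z'. M \<ge> Suc m \<longrightarrow> P M z' \<and> (\<forall>j<L. [z' j = z j] (mod int p ^ m))"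
      using g unfolding good_def by (metis Suc_leD)
    then obtain f where f: "\<And>M. M \<ge> Suc m \<Longrightarrow> P M (f M) \<and> (\<forall>j<L. [f M j = z j] (mod int p ^ m))"
      by metis
    define q where "q = int p ^ Suc m"
    have qpos: "q > 0" using p by (simp add: q_def)
    define r where "r M = (\<lambda>j. if j < L then f M j mod q else undefined)" for M
    have rF: "r ` {Suc m..} \<subseteq> PiE {..<L} (\<lambda>_. {0..<q})"
      using qpos by (auto simp: r_def PiE_def extensional_def)
    have fin: "finite (r ` {Suc m..})"
      by (rule finite_subset[OF rF]) (auto intro: finite_PiE)
    obtain M0 where M0: "M0 \<in> {Suc m..}" and inf: "infinite {M \<in> {Suc m..}. r M = r M0}"
      using pigeonhole_infinite[OF infinite_Ici fin] by auto
    have "good (Suc m) (r M0)"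
      unfolding good_def
    proof (intro allI impI)
      fix M assume M: "M \<ge> Suc m"
      from inf obtain M' where M': "M' \<in> {M \<in> {Suc m..}. r M = r M0}" "M' \<ge> M"
        using infinite_nat_iff_unbounded_le by blast
      have "P M (f M')" using f[of M'] M' M by (auto intro: downs)
      moreover have "\<forall>j<L. [f M' j = r M0 j] (mod int p ^ Suc m)"
      proof (intro allI impI)
        fix j assume "j < L"
        then have "r M0 j = f M' j mod q" using M' by (metis (mono_tags, lifting) mem_Collect_eq r_def)
        then show "[f M' j = r M0 j] (mod int p ^ Suc m)" by (simp add: q_def cong_def)
      qed
      ultimately show "\<exists>z'. P M z' \<and> (\<forall>j<L. [z' j = r M0 j] (mod int p ^ Suc m))" by blast
    qed
    moreover have "\<forall>j<L. [r M0 j = z j] (mod int p ^ m)"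
    proof (intro allI impI)
      fix j assume j: "j < L"
      have "[r M0 j = f M0 j] (mod q)" using j by (simp add: r_def cong_def)
      then have "[r M0 j = f M0 j] (mod int p ^ m)"
        by (rule cong_dvd_modulus) (simp add: q_def)
      moreover have "[f M0 j = z j] (mod int p ^ m)" using f[of M0] M0 j by auto
      ultimately show "[r M0 j = z j] (mod int p ^ m)" by (rule cong_trans)
    qed
    ultimately show ?thesis by blast
  qed
  define seq where "seq = rec_nat (\<lambda>_. 0 :: int)
      (\<lambda>m s. SOME z'. good (Suc m) z' \<and> (\<forall>j<L. [z' j = s j] (mod int p ^ m)))"
  have seq0: "seq 0 = (\<lambda>_. 0)" by (simp add: seq_def)
  have seqS: "seq (Suc m) = (SOME z'. good (Suc m) z' \<and> (\<forall>j<L. [z' j = seq m j] (mod int p ^ m)))" for m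
    by (simp add: seq_def)
  have all: "good m (seq m) \<and> (\<forall>j<L. [seq (Suc m) j = seq m j] (mod int p ^ m))" for m
  proof (induction m)
    case 0
    have g: "good 0 (seq 0)" by (rule good0)
    show ?case using someI_ex[OF step[OF g]] g unfolding seqS by blast
  next
    case (Suc m)
    then have g: "good (Suc m) (seq (Suc m))" using someI_ex[OF step[of m "seq m"]] by (simp add: seqS)
    show ?case using someI_ex[OF step[OF g]] g unfolding seqS by blast
  qed
  show ?thesis
    by (rule exI[of _ "\<lambda>j m. seq m j"]) (use all goodP in \<open>auto simp: padic_int_def\<close>)
qed



lemma sqrt_lift:
  fixes P X :: int
  assumes odd: "odd P"
  shows "\<exists>t. [t^2 = 1 + P * X] (mod P ^ m) \<and> [t = 1] (mod P)"
proof (induction m)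
  case 0
  show ?case by (rule exI[of _ 1]) simp
next
  case (Suc m)
  then obtain t where t1: "[t^2 = 1 + P * X] (mod P ^ m)" and t2: "[t = 1] (mod P)" by blast
  show ?case
  proof (cases "m = 0")
    case True
    then show ?thesis by (intro exI[of _ 1]) (simp add: cong_iff_dvd_diff)
  next
    case False
    from t1 obtain D where D: "t^2 = 1 + P * X + P^m * D"
      by (metis cong_iff_lin cong_sym)
    from t2 obtain k where k: "t = 1 + P * k"
      by (metis cong_iff_lin cong_sym add.commute)
    define h where "h = (P + 1) div 2"
    have h2: "2 * h = P + 1" using odd by (auto simp: h_def elim!: oddE)
    define s where "s = - D * h"
    define t' where "t' = t + P ^ m * s"
    obtain m' where m': "m = Suc m'" using False by (cases m) auto
    have e1: "t'^2 - (1 + P * X) = (t^2 - (1 + P * X)) + P^m * (2*t*s + P^m * s^2)"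
      by (simp add: t'_def power2_eq_square algebra_simps)
    have e2: "t^2 - (1 + P * X) = P^m * D" using D by simp
    have "t'^2 - (1 + P * X) = P^m * (D + 2*t*s + P^m * s^2)"
      unfolding e1 e2 by (simp add: algebra_simps)
    also have "D + 2*t*s + P^m * s^2 = P * (- D + 2*k*s + P^m' * s^2)"
    proof -
      have "D + 2*t*s = D + 2*s + 2 * P * k * s" by (simp add: k algebra_simps)
      also have "2 * s = - D * (P + 1)" proof -
        have "2 * s = - D * (2 * h)" by (simp add: s_def)
        then show ?thesis by (simp only: h2)
      qed
      finally show ?thesis by (simp add: m' algebra_simps)
    qed
    finally have "P ^ Suc m dvd t'^2 - (1 + P * X)" by (simp add: mult.assoc)
    then have c1: "[t'^2 = 1 + P * X] (mod P ^ Suc m)" by (simp add: cong_iff_dvd_diff)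
    have "[t' = t] (mod P)" using m' by (simp add: t'_def cong_iff_dvd_diff)
    then have "[t' = 1] (mod P)" using t2 by (rule cong_trans)
    with c1 show ?thesis by blast
  qed
qed

lemma tri_lift:
  fixes N :: int
  shows "\<exists>z. [z * (z + 1) = 2 * N] (mod 2 ^ Suc m)"
proof (induction m)
  case 0
  show ?case by (rule exI[of _ 0]) (simp add: cong_iff_dvd_diff)
next
  case (Suc m)
  then obtain z where "[z * (z + 1) = 2 * N] (mod 2 ^ Suc m)" by blast
  then obtain D where D: "z * (z + 1) = 2 * N + 2 ^ Suc m * D"
    by (metis cong_iff_lin cong_sym)
  show ?case
  proof (cases "even D")
    case True
    then obtain D' where "D = 2 * D'" by blast
    then have "z * (z + 1) - 2 * N = 2 ^ Suc (Suc m) * D'" using D by simp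
    then show ?thesis by (intro exI[of _ z]) (simp add: cong_iff_dvd_diff)
  next
    case False
    then obtain D' where D': "D = 2 * D' + 1" by (metis oddE)
    define z' where "z' = z + 2 ^ Suc m"
    have e1: "z' * (z' + 1) - 2 * N = (z * (z + 1) - 2 * N) + 2 ^ Suc m * (2 * z + 1 + 2 ^ Suc m)"
      by (simp add: z'_def algebra_simps)
    have e2: "z * (z + 1) - 2 * N = 2 ^ Suc m * D" using D by simp
    have "z' * (z' + 1) - 2 * N = 2 ^ Suc m * (D + 2 * z + 1 + 2 ^ Suc m)"
      unfolding e1 e2 by (simp add: algebra_simps)
    also have "D + 2 * z + 1 + 2 ^ Suc m = 2 * (D' + z + 1 + 2 ^ m)"
      by (simp add: D')
    finally have "z' * (z' + 1) - 2 * N = 2 ^ Suc (Suc m) * (D' + z + 1 + 2 ^ m)"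
      by simp
    then show ?thesis by (intro exI[of _ z']) (simp add: cong_iff_dvd_diff)
  qed
qed



definition Qf :: "nat list \<Rightarrow> (nat \<Rightarrow> int) \<Rightarrow> int" where
  "Qf b v = (\<Sum>j<length b. int (b ! j) * (v j)^2)"

lemma Qf_cong:
  assumes "\<And>j. j < length b \<Longrightarrow> [v j = w j] (mod M)"
  shows "[Qf b v = Qf b w] (mod M)"
  unfolding Qf_def using assms by (intro cong_sum cong_mult cong_pow cong_refl) auto

lemma lemmaA:
  fixes p c :: nat and b :: "nat list"
  assumes pr: "prime p" and od: "odd p" and c0: "c > 0" and hyp: "mult_Zp_sub_DQ p c b"
  shows "\<exists>v. [Qf b v = Qf b u + int c * s] (mod int p ^ m)"
proof -
  define P where "P = int p"
  have prP: "prime P" using pr by (simp add: P_def)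
  have oddP: "odd P" using od by (simp add: P_def)
  have nu: "\<not> is_unit P" using prP not_prime_unit by blast
  define e where "e = multiplicity P (int c)"
  obtain c' where cc: "int c = P ^ e * c'" and c'p: "\<not> P dvd c'"
  proof -
    have "int c \<noteq> 0" using c0 by simp
    from multiplicity_decompose'[OF this nu] show ?thesis using that unfolding e_def by blast
  qed
  show ?thesis
  proof (cases "\<exists>j<length b. \<not> P ^ e dvd int (b ! j) * (u j)^2")
    case True
    then obtain j where j: "j < length b" and nd: "\<not> P ^ e dvd int (b ! j) * (u j)^2" by blast
    define T where "T = int (b ! j) * (u j)^2"
    have T0: "T \<noteq> 0" using nd unfolding T_def by (metis dvd_0_right)
    define r where "r = multiplicity P T"
    have re: "r < e" using multiplicity_lessI[OF T0 nu] nd by (simp add: T_def r_def)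
    obtain C where TC: "T = P ^ r * C" and Cp: "\<not> P dvd C"
      using multiplicity_decompose'[OF T0 nu] unfolding r_def by blast
    have "coprime C (P ^ m)"
      using prime_imp_coprime[OF prP Cp] by (simp add: coprime_commute[of C])
    then obtain C'' where CC: "[C * C'' = 1] (mod P ^ m)" using cong_solve_coprime_int by blast
    define X where "X = P ^ (e - r - 1) * c' * s * C''"
    obtain t where t: "[t^2 = 1 + P * X] (mod P ^ m)" using sqrt_lift[OF oddP] by blast
    define v where "v = u(j := u j * t)"
    have "Qf b v = (\<Sum>k<length b. int (b ! k) * (u k)^2 + (if k = j then T * (t^2 - 1) else 0))"
      unfolding Qf_def by (rule sum.cong) (auto simp: v_def T_def algebra_simps power_mult_distrib)
    also have "\<dots> = Qf b u + T * (t^2 - 1)"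
      using j by (simp add: sum.distrib Qf_def)
    finally have Qv: "Qf b v = Qf b u + T * (t^2 - 1)" .
    have t1: "[t^2 - 1 = P * X] (mod P ^ m)" using t by (simp add: cong_iff_dvd_diff algebra_simps)
    have pe: "P ^ r * (P * P ^ (e - r - 1)) = P ^ e"
      using re by (simp flip: power_add power_Suc)
    have a1: "[T * (t^2 - 1) = T * (P * X)] (mod P ^ m)" using t1 by (rule cong_scalar_left)
    have a2: "T * (P * X) = (P ^ r * (P * P ^ (e - r - 1))) * c' * s * (C * C'')"
      by (simp add: TC X_def algebra_simps)
    have a3: "[(P ^ e) * c' * s * (C * C'') = (P ^ e) * c' * s * 1] (mod P ^ m)"
      using CC by (rule cong_scalar_left)
    have a4: "(P ^ e) * c' * s * 1 = int c * s" using cc by simp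
    have "[T * (t^2 - 1) = int c * s] (mod P ^ m)"
      using cong_trans[OF a1[unfolded a2 pe] a3] unfolding a4 .
    then have "[Qf b v = Qf b u + int c * s] (mod P ^ m)"
      unfolding Qv by (rule cong_add_lcancel[THEN iffD2])
    then show ?thesis unfolding P_def by blast
  next
    case False
    then have "P ^ e dvd Qf b u" unfolding Qf_def by (auto intro!: dvd_sum)
    moreover have "P ^ e dvd int c * s" using cc by simp
    ultimately have "P ^ e dvd Qf b u + int c * s" by simp
    then obtain K where K: "Qf b u + int c * s = P ^ e * K" by blast
    have "coprime c' (P ^ m)"
      using prime_imp_coprime[OF prP c'p] by (simp add: coprime_commute[of c'])
    then obtain h where hh: "[c' * h = 1] (mod P ^ m)" using cong_solve_coprime_int by blast
    have "padic_int p (\<lambda>_. K * h)" by (simp add: padic_int_def)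
    then obtain y where y: "\<forall>m. [int c * (K * h) = (\<Sum>j<length b. int (b ! j) * (y j m)^2)] (mod int p ^ m)"
      using hyp unfolding mult_Zp_sub_DQ_def in_DQ_closure_def by blast
    have b1: "[Qf b (\<lambda>j. y j m) = int c * (K * h)] (mod P ^ m)"
      using y[rule_format, of m] unfolding Qf_def P_def by (rule cong_sym)
    have b2: "int c * (K * h) = P ^ e * K * (c' * h)" by (simp add: cc algebra_simps)
    have b3: "[P ^ e * K * (c' * h) = P ^ e * K * 1] (mod P ^ m)" using hh by (rule cong_scalar_left)
    have b4: "P ^ e * K * 1 = Qf b u + int c * s" using K by simp
    have "[Qf b (\<lambda>j. y j m) = Qf b u + int c * s] (mod P ^ m)"
      using cong_trans[OF b1[unfolded b2] b3] unfolding b4 .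
    then show ?thesis unfolding P_def by blast
  qed
qed



definition Tf :: "nat list \<Rightarrow> (nat \<Rightarrow> int) \<Rightarrow> int" where
  "Tf b z = (\<Sum>j<length b. int (b ! j) * (z j * (z j + 1)))"

definition Sb :: "nat list \<Rightarrow> int" where
  "Sb b = (\<Sum>j<length b. int (b ! j))"

lemma Qf_odd: "Qf b (\<lambda>j. 2 * z j + 1) = 4 * Tf b z + Sb b"
proof -
  have "Qf b (\<lambda>j. 2 * z j + 1) = (\<Sum>j<length b. 4 * (int (b ! j) * (z j * (z j + 1))) + int (b ! j))"
    unfolding Qf_def by (rule sum.cong) (simp_all add: power2_eq_square algebra_simps)
  then show ?thesis by (simp add: sum.distrib sum_distrib_left Tf_def Sb_def)
qed

lemma Tf_cong:
  assumes "\<And>j. j < length b \<Longrightarrow> [v j = w j] (mod M)"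
  shows "[Tf b v = Tf b w] (mod M)"
  unfolding Tf_def using assms by (intro cong_sum cong_mult cong_add cong_refl) auto

lemma lemmaE:
  fixes p c n :: nat and b :: "nat list"
  assumes pr: "prime p" and od: "odd p" and c0: "c > 0" and hyp: "mult_Zp_sub_DQ p c b"
  and h: "[Tf b u + int c * (w * (w + 1)) = 2 * int n] (mod int p ^ m)"
  shows "\<exists>v. [Tf b v = 2 * int n] (mod int p ^ m)"
proof -
  define q where "q = int p ^ m"
  have oq: "odd q" using od by (simp add: q_def)
  have c1: "[4 * (Tf b u + int c * (w * (w + 1))) + Sb b = 4 * (2 * int n) + Sb b] (mod q)"
    using h unfolding q_def by (intro cong_add cong_mult cong_refl)
  have eq: "Qf b (\<lambda>j. 2 * u j + 1) + int c * (4 * (w * (w + 1))) = 4 * (Tf b u + int c * (w * (w + 1))) + Sb b"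
    unfolding Qf_odd by (simp add: algebra_simps)
  have h2: "[Qf b (\<lambda>j. 2 * u j + 1) + int c * (4 * (w * (w + 1))) = 4 * (2 * int n) + Sb b] (mod q)"
    unfolding eq by (rule c1)
  obtain v where v: "[Qf b v = Qf b (\<lambda>j. 2 * u j + 1) + int c * (4 * (w * (w + 1)))] (mod q)"
    using lemmaA[OF pr od c0 hyp] unfolding q_def by blast
  define v' where "v' j = (if even (v j) then v j + q else v j)" for j
  have ov: "odd (v' j)" for j using oq by (auto simp: v'_def)
  have "[Qf b v' = Qf b v] (mod q)"
    by (rule Qf_cong) (auto simp: v'_def cong_iff_dvd_diff)
  define z where "z j = (v' j - 1) div 2" for j
  have zv: "(\<lambda>j. 2 * z j + 1) = v'"
    using ov by (auto simp: z_def fun_eq_iff elim!: oddE)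
  have "[4 * Tf b z + Sb b = 4 * (2 * int n) + Sb b] (mod q)"
    using cong_trans[OF cong_trans[OF \<open>[Qf b v' = Qf b v] (mod q)\<close> v] h2]
    unfolding zv[symmetric] Qf_odd .
  then have "[4 * Tf b z = 4 * (2 * int n)] (mod q)"
    by (simp add: cong_add_rcancel)
  moreover have "coprime (4::int) q"
  proof -
    have "coprime (2::int) q" using oq by simp
    then show ?thesis using coprime_mult_left_iff[of "2::int" 2 q] by simp
  qed
  ultimately have "[Tf b z = 2 * int n] (mod q)" using cong_mult_lcancel[of 4 q "Tf b z" "2 * int n"] by blast
  then show ?thesis unfolding q_def by blast
qed

lemma lemma2:
  fixes n :: nat and b :: "nat list"
  assumes j: "j < length b" and oj: "odd (b ! j)"
  shows "\<exists>v. [Tf b v = 2 * int n] (mod 2 ^ m)"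
proof -
  have "coprime (int (b ! j)) (2 ^ m)" using oj by simp
  then obtain h where hh: "[int (b ! j) * h = 1] (mod 2 ^ m)" using cong_solve_coprime_int by blast
  obtain z0 where z0: "[z0 * (z0 + 1) = 2 * (int n * h)] (mod 2 ^ Suc m)" using tri_lift by blast
  then have z0': "[z0 * (z0 + 1) = 2 * (int n * h)] (mod 2 ^ m)"
    by (rule cong_dvd_modulus) simp
  define v where "v k = (if k = j then z0 else 0)" for k
  have "Tf b v = int (b ! j) * (z0 * (z0 + 1))"
  proof -
    have "Tf b v = (\<Sum>k<length b. if k = j then int (b ! j) * (z0 * (z0 + 1)) else 0)"
      unfolding Tf_def by (rule sum.cong) (auto simp: v_def)
    then show ?thesis using j by simp
  qed
  moreover have "[int (b ! j) * (z0 * (z0 + 1)) = int (b ! j) * (2 * (int n * h))] (mod 2 ^ m)"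
    using z0' by (rule cong_scalar_left)
  moreover have "int (b ! j) * (2 * (int n * h)) = 2 * int n * (int (b ! j) * h)" by (simp add: algebra_simps)
  moreover have "[2 * int n * (int (b ! j) * h) = 2 * int n * 1] (mod 2 ^ m)" using hh by (rule cong_scalar_left)
  ultimately have "[Tf b v = 2 * int n] (mod 2 ^ m)" by (metis cong_trans mult.right_neutral)
  then show ?thesis by blast
qed

lemma levels_loc:
  fixes p n :: nat and b :: "nat list"
  assumes pr: "prime p" and ex: "\<And>m. \<exists>v. [Tf b v = 2 * int n] (mod int p ^ m)"
  shows "loc_rep_at b p n"
proof -
  have p1: "p > 1" using prime_gt_1_nat[OF pr] .
  have "\<exists>x. (\<forall>j<length b. padic_int p (x j)) \<and> (\<forall>m. [Tf b (\<lambda>j. x j m) = 2 * int n] (mod int p ^ m))"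
  proof (rule compactness[OF p1])
    show "[Tf b z = 2 * int n] (mod int p ^ m)" if "[Tf b z = 2 * int n] (mod int p ^ Suc m)" for m z
      using that by (rule cong_dvd_modulus) simp
    show "[Tf b z' = 2 * int n] (mod int p ^ m)"
      if "\<And>j. j < length b \<Longrightarrow> [z j = z' j] (mod int p ^ m)" "[Tf b z = 2 * int n] (mod int p ^ m)" for m z z'
      using cong_trans[OF Tf_cong[of b z' z, OF cong_sym[OF that(1)]] that(2)] .
    show "\<exists>z. [Tf b z = 2 * int n] (mod int p ^ m)" for m by (rule ex)
  qed
  then show ?thesis unfolding loc_rep_at_def Tf_def by blast
qed



lemma tri_sum2: "2 * (\<Sum>j<length a. int (a ! j) * (x j * (x j + 1) div 2)) = Tf a x"
proof -
  have "2 * (\<Sum>j<length a. int (a ! j) * (x j * (x j + 1) div 2)) =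
        (\<Sum>j<length a. 2 * (int (a ! j) * (x j * (x j + 1) div 2)))"
    by (rule sum_distrib_left)
  also have "\<dots> = Tf a x" unfolding Tf_def
  proof (rule sum.cong)
    fix j
    have "even (x j * (x j + 1))" by simp
    then have "2 * (x j * (x j + 1) div 2) = x j * (x j + 1)" by simp
    then show "2 * (int (a ! j) * (x j * (x j + 1) div 2)) = int (a ! j) * (x j * (x j + 1))"
      by (metis mult.left_commute)
  qed simp
  finally show ?thesis .
qed

lemma tri_rep_Tf: "tri_rep a n \<longleftrightarrow> (\<exists>x. Tf a x = 2 * int n)"
  unfolding tri_rep_def by (simp flip: tri_sum2)

lemma Tf_split:
  assumes "i < length a"
  shows "Tf a x = int (a ! i) * (x i * (x i + 1)) + Tf (del_nth a i) (\<lambda>j. x (sk i j))"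
  unfolding Tf_def using sum_del[OF assms, of "\<lambda>c j. int c * (x j * (x j + 1))"] by simp

lemma Tf_ext:
  assumes "i < length a"
  shows "Tf a (ext i t w) = int (a ! i) * (t * (t + 1)) + Tf (del_nth a i) w"
  using Tf_split[OF assms, of "ext i t w"] by simp

lemma loc_rep_at_Tf:
  "loc_rep_at a p n \<longleftrightarrow> (\<exists>x. (\<forall>j<length a. padic_int p (x j)) \<and> (\<forall>m. [Tf a (\<lambda>j. x j m) = 2 * int n] (mod int p ^ m)))"
  unfolding loc_rep_at_def Tf_def by simp

lemma padic_const: "padic_int p (\<lambda>_. k)" by (simp add: padic_int_def)



lemma prim_odd:
  assumes "primitive b"
  shows "\<exists>j<length b. odd (b ! j)"
proof (rule ccontr)
  assume "\<not> ?thesis"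
  then have "\<And>x. x \<in> set b \<Longrightarrow> 2 dvd x" by (auto simp: in_set_conv_nth)
  then have "(2::nat) dvd Gcd (set b)" by (rule Gcd_greatest)
  then show False using assms by (simp add: primitive_def)
qed

lemma key_loc:
  assumes i: "i < length a" and c0: "a ! i > 0" and prim: "primitive (del_nth a i)"
  and hyp: "\<forall>p. prime p \<and> odd p \<longrightarrow> mult_Zp_sub_DQ p (a ! i) (del_nth a i)"
  and ex: "\<And>p m. prime p \<Longrightarrow> \<exists>x. [Tf a x = 2 * int n] (mod int p ^ m)"
  shows "loc_rep (del_nth a i) n"
  unfolding loc_rep_def
proof (intro allI impI)
  fix p :: nat assume pr: "prime p"
  show "loc_rep_at (del_nth a i) p n"
  proof (rule levels_loc[OF pr])
    fix m
    obtain x where x: "[Tf a x = 2 * int n] (mod int p ^ m)" using ex[OF pr] by blast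
    then have xb: "[Tf (del_nth a i) (\<lambda>j. x (sk i j)) + int (a ! i) * (x i * (x i + 1)) = 2 * int n] (mod int p ^ m)"
      using Tf_split[OF i, of x] by (simp add: add.commute)
    show "\<exists>v. [Tf (del_nth a i) v = 2 * int n] (mod int p ^ m)"
    proof (cases "p = 2")
      case True
      obtain j where "j < length (del_nth a i)" "odd (del_nth a i ! j)" using prim_odd[OF prim] by blast
      from lemma2[OF this, of n m] show ?thesis using True by simp
    next
      case False
      then have od: "odd p" using pr prime_odd_nat prime_ge_2_nat[OF pr] by fastforce
      show ?thesis using lemmaE[OF pr od c0 _ xb] hyp pr od by blast
    qed
  qed
qed



lemma ext_padic:
  assumes i: "i < length a" and x: "\<forall>j<length (del_nth a i). padic_int p (x j)"
  shows "\<forall>j<length a. padic_int p (ext i (\<lambda>_. 0) x j)"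
proof (intro allI impI)
  fix j assume j: "j < length a"
  have L: "length (del_nth a i) = length a - 1" using i by (rule length_del_nth)
  show "padic_int p (ext i (\<lambda>_. 0) x j)"
  proof (cases "j < i")
    case True then show ?thesis using x L i by (simp add: ext_def)
  next
    case False
    show ?thesis
    proof (cases "j = i")
      case True then show ?thesis by (simp add: ext_def padic_const)
    next
      case False
      with \<open>\<not> j < i\<close> j show ?thesis using x L by (simp add: ext_def)
    qed
  qed
qed

lemma ext_app: "(\<lambda>j. ext i (\<lambda>_. (0::int)) x j m) = ext i 0 (\<lambda>j. x j m)"
  by (auto simp: ext_def fun_eq_iff)

lemma loc_b_a:
  assumes i: "i < length a" and "loc_rep (del_nth a i) n"
  shows "loc_rep a n"
  unfolding loc_rep_def
proof (intro allI impI)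
  fix p :: nat assume "prime p"
  with assms(2) have "loc_rep_at (del_nth a i) p n" unfolding loc_rep_def by simp
  then obtain x where x: "\<forall>j<length (del_nth a i). padic_int p (x j)"
    and xc: "\<forall>m. [Tf (del_nth a i) (\<lambda>j. x j m) = 2 * int n] (mod int p ^ m)"
    unfolding loc_rep_at_Tf by blast
  show "loc_rep_at a p n" unfolding loc_rep_at_Tf
    apply (rule exI[of _ "ext i (\<lambda>_. 0) x"])
    using ext_padic[OF i x] xc by (simp add: ext_app Tf_ext[OF i])
qed

lemma tri_b_a:
  assumes i: "i < length a" and "tri_rep (del_nth a i) n"
  shows "tri_rep a n"
proof -
  obtain x where "Tf (del_nth a i) x = 2 * int n" using assms(2) unfolding tri_rep_Tf by blast
  then have "Tf a (ext i 0 x) = 2 * int n" by (simp add: Tf_ext[OF i])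
  then show ?thesis unfolding tri_rep_Tf by blast
qed

lemma backward:
  assumes i: "i < length a" and c0: "a ! i > 0" and prim: "primitive (del_nth a i)"
  and reg: "regular (del_nth a i)"
  and hyp: "\<forall>p. prime p \<and> odd p \<longrightarrow> mult_Zp_sub_DQ p (a ! i) (del_nth a i)"
  shows "old_regular a"
proof -
  have ba: "tri_rep (del_nth a i) n" if tn: "tri_rep a n" and n0: "n > 0" for n
  proof -
    obtain x where x: "Tf a x = 2 * int n" using tn unfolding tri_rep_Tf by blast
    have "loc_rep (del_nth a i) n"
      by (rule key_loc[OF i c0 prim hyp], rule exI[of _ x], simp add: x)
    then show ?thesis using reg n0 unfolding regular_def by blast
  qed
  have rega: "regular a" unfolding regular_def
  proof (intro allI impI)
    fix n :: nat assume n: "n > 0" and lr: "loc_rep a n"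
    have "loc_rep (del_nth a i) n"
    proof (rule key_loc[OF i c0 prim hyp])
      fix p m :: nat assume "prime p"
      with lr have "loc_rep_at a p n" unfolding loc_rep_def by simp
      then obtain x where "\<forall>m. [Tf a (\<lambda>j. x j m) = 2 * int n] (mod int p ^ m)"
        unfolding loc_rep_at_Tf by blast
      then show "\<exists>x. [Tf a x = 2 * int n] (mod int p ^ m)" by blast
    qed
    then have "tri_rep (del_nth a i) n" using reg n unfolding regular_def by blast
    then show "tri_rep a n" by (rule tri_b_a[OF i])
  qed
  show ?thesis unfolding old_regular_def
  proof (intro conjI exI[of _ i] allI impI)
    show "regular a" by (rule rega)
    show "i < length a" by (rule i)
    fix n :: nat assume "n > 0"
    then show "tri_rep (del_nth a i) n = tri_rep a n" using ba tri_b_a[OF i] by blast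
  qed
qed



lemma forward:
  assumes pos: "\<forall>x\<in>set a. x > 0" and g: "Gcd (set a) = 1" and old: "old_regular a"
  shows "\<exists>i<length a. primitive (del_nth a i) \<and> regular (del_nth a i) \<and>
       (\<forall>p. prime p \<and> odd p \<longrightarrow> mult_Zp_sub_DQ p (a ! i) (del_nth a i))"
proof -
  from old obtain i where i: "i < length a" and rega: "regular a"
    and E: "\<And>n. n > 0 \<Longrightarrow> tri_rep (del_nth a i) n \<longleftrightarrow> tri_rep a n"
    unfolding old_regular_def by blast
  define b where "b = del_nth a i"
  define c where "c = a ! i"
  have c0: "c > 0" using pos i by (simp add: c_def)
  have close: "tri_rep b (N + c)" if tN: "tri_rep b N" for N
  proof -
    obtain x where "Tf b x = 2 * int N" using tN unfolding tri_rep_Tf by blast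
    then have "Tf a (ext i 1 x) = 2 * int (N + c)" by (simp add: Tf_ext[OF i] b_def c_def)
    then have "tri_rep a (N + c)" unfolding tri_rep_Tf by blast
    then show ?thesis using E[of "N + c"] c0 by (simp add: b_def)
  qed
  have closek: "tri_rep b (N + c * k)" if tN: "tri_rep b N" for N k
  proof (induction k)
    case 0 then show ?case using tN by simp
  next
    case (Suc k)
    from close[OF this] show ?case by (simp add: algebra_simps)
  qed
  have tri0: "tri_rep b 0" unfolding tri_rep_def by (rule exI[of _ "\<lambda>_. 0"]) simp
  have regb: "regular b" unfolding regular_def
  proof (intro allI impI)
    fix n :: nat assume n: "n > 0" and "loc_rep b n"
    then have "loc_rep a n" using loc_b_a[OF i] by (simp add: b_def)
    then have "tri_rep a n" using rega n unfolding regular_def by blast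
    then show "tri_rep b n" using E[OF n] by (simp add: b_def)
  qed
  have primb: "primitive b"
  proof -
    have "tri_rep b c" using closek[OF tri0, of 1] by simp
    then obtain x where x: "(\<Sum>j<length b. int (b ! j) * (x j * (x j + 1) div 2)) = int c"
      unfolding tri_rep_def by blast
    define d where "d = Gcd (set b)"
    have db: "d dvd y" if "y \<in> set b" for y using that by (simp add: d_def Gcd_dvd)
    have "int d dvd (\<Sum>j<length b. int (b ! j) * (x j * (x j + 1) div 2))"
      by (intro dvd_sum dvd_mult2) (auto simp: db)
    then have dc: "d dvd c" using x by simp
    have e: "a = take i a @ c # drop (Suc i) a" unfolding c_def by (rule id_take_nth_drop[OF i])
    have "set a \<subseteq> insert c (set b)"
      by (subst e) (auto simp: b_def del_nth_def)
    then have "d dvd y" if "y \<in> set a" for y using that db dc by blast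
    then have "d dvd Gcd (set a)" by (rule Gcd_greatest)
    then show ?thesis using g by (simp add: primitive_def d_def)
  qed
  have dq: "mult_Zp_sub_DQ p c b" if pr: "prime p" and od: "odd p" for p
    unfolding mult_Zp_sub_DQ_def
  proof (intro allI impI)
    fix \<gamma> assume gam: "padic_int p \<gamma>"
    have p1: "p > 1" using prime_gt_1_nat[OF pr] .
    have "\<exists>x. (\<forall>j<length b. padic_int p (x j)) \<and> (\<forall>m. [int c * \<gamma> m = Qf b (\<lambda>j. x j m)] (mod int p ^ m))"
    proof (rule compactness[OF p1])
      fix m z assume h: "[int c * \<gamma> (Suc m) = Qf b z] (mod int p ^ Suc m)"
      have "[int c * \<gamma> m = int c * \<gamma> (Suc m)] (mod int p ^ m)"
        using gam unfolding padic_int_def by (intro cong_scalar_left) (simp add: cong_sym)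
      moreover have "[int c * \<gamma> (Suc m) = Qf b z] (mod int p ^ m)"
        using h by (rule cong_dvd_modulus) simp
      ultimately show "[int c * \<gamma> m = Qf b z] (mod int p ^ m)" by (rule cong_trans)
    next
      fix m z z' assume h1: "\<And>j. j < length b \<Longrightarrow> [z j = z' j] (mod int p ^ m)"
        and h2: "[int c * \<gamma> m = Qf b z] (mod int p ^ m)"
      show "[int c * \<gamma> m = Qf b z'] (mod int p ^ m)"
        using h2 Qf_cong[of b z z', OF h1] by (rule cong_trans)
    next
      fix m
      define q where "q = int p ^ m"
      have oq: "odd q" using od by (simp add: q_def)
      have qpos: "q > 0" using p1 by (simp add: q_def)
      define y0 where "y0 = (q - 1) div 2"
      have y0q: "2 * y0 + 1 = q" using oq by (auto simp: y0_def elim!: oddE)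
      have y0nn: "y0 \<ge> 0" using qpos by (simp add: y0_def)
      define S where "S = (\<Sum>j<length b. int (b ! j) * (y0 * (y0 + 1) div 2))"
      have Snn: "S \<ge> 0" unfolding S_def
        using y0nn by (intro sum_nonneg mult_nonneg_nonneg) (simp_all add: pos_imp_zdiv_nonneg_iff)
      define N0 where "N0 = nat S"
      have tN0: "tri_rep b N0" unfolding tri_rep_def N0_def
        by (rule exI[of _ "\<lambda>_. y0"]) (use Snn in \<open>simp add: S_def\<close>)
      have TN0: "Tf b (\<lambda>_. y0) = 2 * int N0" using tri_sum2[of b "\<lambda>_. y0"] Snn by (simp add: S_def N0_def)
      have "coprime ((2::int) ^ 3) q" by (rule coprime_power_left_iff[THEN iffD2]) (simp add: oq)
      then have "coprime (8::int) q" by simp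
      then obtain h where hh: "[8 * h = 1] (mod q)" using cong_solve_coprime_int by blast
      define k where "k = nat ((\<gamma> m * h) mod q)"
      have kk: "int k = (\<gamma> m * h) mod q" using qpos by (simp add: k_def)
      have "tri_rep b (N0 + c * k)" by (rule closek[OF tN0])
      then obtain x where x: "Tf b x = 2 * int (N0 + c * k)" unfolding tri_rep_Tf by blast
      have Qz: "Qf b (\<lambda>j. 2 * x j + 1) = 4 * Tf b x + Sb b" by (rule Qf_odd)
      have Qq: "Qf b (\<lambda>_. q) = 4 * Tf b (\<lambda>_. y0) + Sb b" using Qf_odd[of b "\<lambda>_. y0"] y0q by simp
      have eq: "Qf b (\<lambda>j. 2 * x j + 1) = Qf b (\<lambda>_. q) + int c * (8 * int k)"
        unfolding Qz Qq x TN0 by (simp add: algebra_simps)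
      have q0: "[Qf b (\<lambda>_. q) = 0] (mod q)" unfolding Qf_def cong_0_iff
        by (intro dvd_sum) (simp add: power2_eq_square)
      have "[8 * int k = 8 * (\<gamma> m * h)] (mod q)" unfolding kk by (intro cong_scalar_left) simp
      moreover have "8 * (\<gamma> m * h) = \<gamma> m * (8 * h)" by simp
      moreover have "[\<gamma> m * (8 * h) = \<gamma> m * 1] (mod q)" using hh by (rule cong_scalar_left)
      ultimately have k8: "[8 * int k = \<gamma> m] (mod q)" by (metis cong_trans mult.right_neutral)
      have "[Qf b (\<lambda>_. q) + int c * (8 * int k) = 0 + int c * \<gamma> m] (mod q)"
        using q0 k8 by (intro cong_add cong_scalar_left)
      then have "[int c * \<gamma> m = Qf b (\<lambda>j. 2 * x j + 1)] (mod q)" unfolding eq by (simp add: cong_sym)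
      then show "\<exists>z. [int c * \<gamma> m = Qf b z] (mod int p ^ m)" unfolding q_def by blast
    qed
    then show "in_DQ_closure p b (\<lambda>m. int c * \<gamma> m)"
      unfolding in_DQ_closure_def Qf_def by blast
  qed
  show ?thesis
    apply (rule exI[of _ i])
    using i primb regb dq unfolding b_def c_def by blast
qed


theorem lemma3p1:
  fixes a :: "nat list"
  assumes "length a \<ge> 3"
    and "\<forall>x\<in>set a. x > 0"
    and "Gcd (set a) = 1"
  shows "old_regular a \<longleftrightarrow>
    (\<exists>i<length a. primitive (del_nth a i) \<and> regular (del_nth a i) \<and>
       (\<forall>p. prime p \<and> odd p \<longrightarrow> mult_Zp_sub_DQ p (a ! i) (del_nth a i)))"
proof
  assume "old_regular a"
  then show "\<exists>i<length a. primitive (del_nth a i) \<and> regular (del_nth a i) \<and>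
       (\<forall>p. prime p \<and> odd p \<longrightarrow> mult_Zp_sub_DQ p (a ! i) (del_nth a i))"
    by (rule forward[OF assms(2,3)])
next
  assume "\<exists>i<length a. primitive (del_nth a i) \<and> regular (del_nth a i) \<and>
       (\<forall>p. prime p \<and> odd p \<longrightarrow> mult_Zp_sub_DQ p (a ! i) (del_nth a i))"
  then obtain i where i: "i < length a" and pr: "primitive (del_nth a i)" and rg: "regular (del_nth a i)"
    and h: "\<forall>p. prime p \<and> odd p \<longrightarrow> mult_Zp_sub_DQ p (a ! i) (del_nth a i)" by blast
  have "a ! i > 0" using assms(2) i by simp
  then show "old_regular a" by (rule backward[OF i _ pr rg h])
qed

end
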